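(* Let $a, b \in \mathbb{N}$ and $n \in \mathbb{Z}^+$. Consider, in the ring $\mathbb{Z}$, the Frobenius template $(\mathbb{N}, (n + \mathbb{N}) \cup \{0\}, \mathbb{N})$. If $a, b$ are coprime and $n - 1$ is divisible by neither $a$ nor $b$, then \[ \mathrm{Frob}(a, b) = (a + b)n + \chi(a, b) + \mathbb{N}, \] where $\mathrm{Frob}$ is taken with respect to this template.
   Context: $\mathbb{N}$ denotes the nonnegative integers and $\mathbb{Z}^+ = \mathbb{N}\setminus\{0\}$; for $S \subseteq \mathbb{Z}$ and $g \in \mathbb{Z}$, $g + S = \{g + s : s \in S\}$. For coprime $a, b \in \mathbb{N}$, $\chi(a,b)$ denotes the least $w \in \mathbb{N}$ such that $w + \mathbb{N} \subseteq \{\lambda_1 a + \lambda_2 b : \lambda_1, \lambda_2 \in \mathbb{N}\}$; it equals $(a-1)(b-1)$. For the template $(\mathbb{N}, (n + \mathbb{N}) \cup \{0\}, \mathbb{N})$: $MN(a, b) = \{\lambda_1 a + \lambda_2 b : \lambda_1, \lambda_2 \in (n + \mathbb{N}) \cup \{0\}\}$ and $\mathrm{Frob}(a, b) = \{w \in \mathbb{Z} : w + \mathbb{N} \subseteq MN(a, b)\}$. *)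

theory Defs
  imports Main
begin

definition semigrp2 :: "int \<Rightarrow> int \<Rightarrow> int set" where
  "semigrp2 a b = {l1 * a + l2 * b | l1 l2 :: int. l1 \<ge> 0 \<and> l2 \<ge> 0}"

definition chi :: "int \<Rightarrow> int \<Rightarrow> int" where
  "chi a b = (LEAST w :: int. w \<ge> 0 \<and> (\<forall>k::int. k \<ge> 0 \<longrightarrow> w + k \<in> semigrp2 a b))"

definition coeffset :: "int \<Rightarrow> int set" where
  "coeffset n = {x. x \<ge> n} \<union> {0}"

definition MN :: "int \<Rightarrow> int \<Rightarrow> int \<Rightarrow> int set" where
  "MN n a b = {l1 * a + l2 * b | l1 l2. l1 \<in> coeffset n \<and> l2 \<in> coeffset n}"

definition Frob :: "int \<Rightarrow> int \<Rightarrow> int \<Rightarrow> int set" where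
  "Frob n a b = {w :: int. \<forall>k::int. k \<ge> 0 \<longrightarrow> w + k \<in> MN n a b}"

end

theory Submission
  imports Defs
begin

lemma semi_all:
  fixes a b x :: int
  assumes "a \<ge> 1" "b \<ge> 1" "coprime a b" "x \<ge> (a-1)*(b-1)"
  shows "x \<in> semigrp2 a b"
proof -
  obtain u v where uv: "u*a + v*b = gcd a b" using bezout_int by blast
  with assms(3) have uv1: "u*a + v*b = 1" by simp
  define l1 where "l1 = (x*u) mod b"
  have l1: "0 \<le> l1" "l1 \<le> b - 1" using assms(2) unfolding l1_def by auto
  have q: "l1 = x*u - b * ((x*u) div b)" unfolding l1_def by (simp add: minus_div_mult_eq_mod[symmetric])
  have xa: "x*u*a = x - x*v*b" using uv1 by (metis add_diff_cancel_right' distrib_left mult.assoc mult.right_neutral)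
  have "x - l1*a = b*(x*v + ((x*u) div b)*a)"
  proof -
    have "x - l1*a = x - (x*u*a - b*((x*u) div b)*a)" by (simp add: q left_diff_distrib)
    also have "\<dots> = x - x*u*a + b*((x*u) div b)*a" by simp
    also have "\<dots> = x*v*b + b*((x*u) div b)*a" by (simp add: xa)
    also have "\<dots> = b*(x*v + ((x*u) div b)*a)" by (simp add: algebra_simps)
    finally show ?thesis .
  qed
  then have "b dvd (x - l1*a)" by (metis dvd_triv_left)
  then obtain l2 where l2: "x - l1*a = b*l2" by blast
  have "l1 * a \<le> (b-1)*a" using l1 assms by (simp add: mult_right_mono)
  then have "b*l2 > -b" using l2 assms(4) by (simp add: algebra_simps)
  then have "l2 \<ge> 0"
  proof -
    assume h: "b*l2 > -b"
    show "l2 \<ge> 0"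
    proof (rule ccontr)
      assume "\<not> l2 \<ge> 0"
      then have "l2 \<le> -1" by simp
      then have "b*l2 \<le> b*(-1)" using assms(2) by (intro mult_left_mono) auto
      then show False using h by simp
    qed
  qed
  then show ?thesis unfolding semigrp2_def using l1 l2
    by (intro CollectI exI[of _ l1] exI[of _ l2]) (simp add: algebra_simps)
qed

lemma semi_not:
  fixes a b :: int
  assumes "a \<ge> 1" "b \<ge> 1" "coprime a b"
  shows "a*b - a - b \<notin> semigrp2 a b"
proof
  assume "a*b - a - b \<in> semigrp2 a b"
  then obtain l1 l2 where l: "l1 \<ge> 0" "l2 \<ge> 0" "a*b - a - b = l1*a + l2*b"
    unfolding semigrp2_def by blast
  have e1: "(l1+1)*a = (a - 1 - l2)*b" using l(3) by (simp add: algebra_simps)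
  have "b dvd (l1+1)*a" by (metis e1 dvd_triv_right)
  then have "b dvd (l1+1)" using assms(3) by (metis coprime_commute coprime_dvd_mult_left_iff)
  then have b1: "l1 + 1 \<ge> b" using l(1) by (simp add: zdvd_imp_le)
  have e2: "(l2+1)*b = (b - 1 - l1)*a" using l(3) by (simp add: algebra_simps)
  have "a dvd (l2+1)*b" by (metis e2 dvd_triv_right)
  then have "a dvd (l2+1)" using assms(3) by (metis coprime_dvd_mult_left_iff)
  then have a1: "l2 + 1 \<ge> a" using l(2) by (simp add: zdvd_imp_le)
  have "l1*a \<ge> (b-1)*a" using b1 assms by (simp add: mult_right_mono)
  moreover have "l2*b \<ge> (a-1)*b" using a1 assms by (simp add: mult_right_mono)
  moreover have "a*b > 0" using assms by simp
  ultimately show False using l(3) by (simp add: algebra_simps)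
qed

lemma chi_eq:
  fixes a b :: int
  assumes "a \<ge> 1" "b \<ge> 1" "coprime a b"
  shows "chi a b = (a-1)*(b-1)"
  unfolding chi_def
proof (rule Least_equality)
  show "(a-1)*(b-1) \<ge> 0 \<and> (\<forall>k::int. k \<ge> 0 \<longrightarrow> (a-1)*(b-1) + k \<in> semigrp2 a b)"
    using assms semi_all by simp
next
  fix y assume y: "y \<ge> 0 \<and> (\<forall>k::int. k \<ge> 0 \<longrightarrow> y + k \<in> semigrp2 a b)"
  show "(a-1)*(b-1) \<le> y"
  proof (rule ccontr)
    assume "\<not> ?thesis"
    then have "a*b - a - b - y \<ge> 0" by (simp add: algebra_simps)
    then have "y + (a*b - a - b - y) \<in> semigrp2 a b" using y by blast
    moreover have "y + (a*b - a - b - y) = a*b - a - b" by simp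
    ultimately show False using semi_not[OF assms] by metis
  qed
qed

theorem proposition3p2:
  fixes a b n :: int
  assumes "a \<ge> 0" and "b \<ge> 0" and "n \<ge> 1"
    and "coprime a b"
    and "\<not> a dvd (n - 1)" and "\<not> b dvd (n - 1)"
  shows "Frob n a b = {w. w \<ge> (a + b) * n + chi a b}"
proof -
  have a1: "a \<ge> 1"
  proof (rule ccontr)
    assume "\<not> a \<ge> 1" then have "a = 0" using assms by simp
    then have "is_unit b" using assms(4) by simp
    then show False using assms(6) unit_imp_dvd by blast
  qed
  have b1: "b \<ge> 1"
  proof (rule ccontr)
    assume "\<not> b \<ge> 1" then have "b = 0" using assms by simp
    then have "is_unit a" using assms(4) by simp
    then show False using assms(5) unit_imp_dvd by blast
  qed
  have chi: "chi a b = (a-1)*(b-1)" using chi_eq[OF a1 b1 assms(4)] .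
  define m where "m = (a+b)*n + a*b - a - b"
  have notm: "m \<notin> MN n a b"
  proof
    assume "m \<in> MN n a b"
    then obtain l1 l2 where l: "l1 \<in> coeffset n" "l2 \<in> coeffset n" "m = l1*a + l2*b"
      unfolding MN_def by blast
    show False
    proof (cases "l1 = 0")
      case True
      then have "a*(n-1) = b*(l2 - n - a + 1)" using l(3) unfolding m_def by (simp add: algebra_simps)
      then have "b dvd a*(n-1)" by (metis dvd_triv_left)
      then have "b dvd (n-1)" using assms(4) by (metis coprime_commute coprime_dvd_mult_right_iff)
      then show False using assms(6) by simp
    next
      case F1: False
      show False
      proof (cases "l2 = 0")
        case True
        then have "b*(n-1) = a*(l1 - n - b + 1)" using l(3) unfolding m_def by (simp add: algebra_simps)
        then have "a dvd b*(n-1)" by (metis dvd_triv_left)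
        then have "a dvd (n-1)" using assms(4) by (metis coprime_dvd_mult_right_iff)
        then show False using assms(5) by simp
      next
        case False
        then have "l1 \<ge> n" "l2 \<ge> n" using F1 l unfolding coeffset_def by auto
        moreover have "a*b - a - b = (l1 - n)*a + (l2-n)*b" using l(3) unfolding m_def by (simp add: algebra_simps)
        ultimately have "a*b - a - b \<in> semigrp2 a b" unfolding semigrp2_def by force
        then show False using semi_not[OF a1 b1 assms(4)] by simp
      qed
    qed
  qed
  show ?thesis
  proof (rule set_eqI, rule iffI)
    fix w assume "w \<in> Frob n a b"
    then have H: "\<And>k. k \<ge> 0 \<Longrightarrow> w + k \<in> MN n a b" unfolding Frob_def by blast
    show "w \<in> {w. w \<ge> (a + b) * n + chi a b}"
    proof (rule ccontr)
      assume "w \<notin> {w. w \<ge> (a + b) * n + chi a b}"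
      then have "m - w \<ge> 0" unfolding chi m_def by (simp add: algebra_simps)
      from H[OF this] notm show False by simp
    qed
  next
    fix w assume "w \<in> {w. w \<ge> (a + b) * n + chi a b}"
    then have w: "w \<ge> (a + b) * n + (a-1)*(b-1)" using chi by simp
    show "w \<in> Frob n a b" unfolding Frob_def
    proof (intro CollectI allI impI)
      fix k :: int assume "k \<ge> 0"
      then have "w + k - (a+b)*n \<ge> (a-1)*(b-1)" using w by simp
      then have "w + k - (a+b)*n \<in> semigrp2 a b" using semi_all[OF a1 b1 assms(4)] by blast
      then obtain l1 l2 where l: "l1 \<ge> 0" "l2 \<ge> 0" "w + k - (a+b)*n = l1*a + l2*b"
        unfolding semigrp2_def by blast
      have "w + k = (l1+n)*a + (l2+n)*b" using l(3) by (simp add: algebra_simps)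
      moreover have "l1 + n \<in> coeffset n" "l2 + n \<in> coeffset n" using l unfolding coeffset_def by auto
      ultimately show "w + k \<in> MN n a b" unfolding MN_def by blast
    qed
  qed
qed

end
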